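(* Let $n\ge 3$ and consider the regular-polygon generalized probabilistic theory with state space $\Omega_n$ and effect set $\mathcal{E}_n$ (defined in the context). If $n$ is odd with $n\ge 5$, or $n$ is even with $n\ge 6$, then this theory does not satisfy Information Symmetry. That is, there exist two pure states $\omega,\omega'\in\Omega_n$ such that every minimum-error measurement $\{e,u-e\}$ for discriminating $\omega$ and $\omega'$ in which $e$ is an extremal point of $\mathcal{E}_n$ has $p(e\mid\omega')\neq p(u-e\mid\omega)$.
   Context: **Regular polygon model.** Fix $n\ge3$ and set $r_n=\sqrt{\sec(\pi/n)}$. - **Pure states.** These are $\omega_i=\big(r_n\cos\tfrac{2\pi i}{n},\,r_n\sin\tfrac{2\pi i}{n},\,1\big)^T\in\mathbb{R}^3$ for $i=0,\dots,n-1$. The state space $\Omega_n$ is their convex hull. - **Unit effect.** $u=(0,0,1)^T$. - **Extremal effects, even $n$.** $e_i=\tfrac12\big(r_n\cos\tfrac{(2i-1)\pi}{n},\,r_n\sin\tfrac{(2i-1)\pi}{n},\,1\big)^T$. - **Extremal effects, odd $n$.** $e_i=\tfrac{1}{1+r_n^2}\big(r_n\cos\tfrac{2\pi i}{n},\,r_n\sin\tfrac{2\pi i}{n},\,1\big)^T$. - **Complements.** $\bar e_i=u-e_i$. - **Effect set.** $\mathcal{E}_n$ is the convex hull of $0$, $u$ and $\{e_i,\bar e_i\}_{i=0}^{n-1}$. - **Probabilities.** The probability that effect $e$ clicks on state $\omega$ is $p(e\mid\omega)=e\cdot\omega$, the Euclidean inner product. - **Measurements.** A two-outcome measurement is a pair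 $\{e,u-e\}$ with $e\in\mathcal{E}_n$. **Binary discrimination with uniform prior.** One of two states $\omega_1,\omega_2$ is prepared, each with probability $1/2$. One performs $\{e_1,e_2\}$ with $e_1+e_2=u$ and guesses $\omega_i$ when $e_i$ clicks. - The two error probabilities are $p_{12}=p(e_1\mid\omega_2)$ and $p_{21}=p(e_2\mid\omega_1)$. - The total error is $p_E=\tfrac12(p_{12}+p_{21})$. - A minimum-error measurement is one minimizing $p_E$ over all allowed two-outcome measurements. **Information Symmetry (IS).** A theory satisfies IS if, for every pair of distinct pure states, there is a minimum-error measurement $\{e,u-e\}$ with $e$ an extremal point of the effect set such that $p_{12}=p_{21}$. *)

theory Defs
  imports "HOL-Analysis.Analysis"
begin

definition rn :: "nat \<Rightarrow> real" where
  "rn n = sqrt (1 / cos (pi / real n))"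

definition pure_state :: "nat \<Rightarrow> nat \<Rightarrow> real^3" where
  "pure_state n i = vector [rn n * cos (2 * pi * real i / real n),
                            rn n * sin (2 * pi * real i / real n), 1]"

definition pure_states :: "nat \<Rightarrow> (real^3) set" where
  "pure_states n = {pure_state n i | i. i < n}"

definition state_space :: "nat \<Rightarrow> (real^3) set" where
  "state_space n = convex hull (pure_states n)"

definition unit_eff :: "real^3" where
  "unit_eff = vector [0, 0, 1]"

definition ext_eff :: "nat \<Rightarrow> nat \<Rightarrow> real^3" where
  "ext_eff n i =
     (if even n then
        (1/2) *\<^sub>R vector [rn n * cos ((2 * real i - 1) * pi / real n),
                           rn n * sin ((2 * real i - 1) * pi / real n), 1]
      else
        (1 / (1 + (rn n)^2)) *\<^sub>R vector [rn n * cos (2 * pi * real i / real n),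
                                         rn n * sin (2 * pi * real i / real n), 1])"

definition effect_set :: "nat \<Rightarrow> (real^3) set" where
  "effect_set n = convex hull ({0, unit_eff} \<union> {ext_eff n i | i. i < n}
                                \<union> {unit_eff - ext_eff n i | i. i < n})"

definition prob :: "real^3 \<Rightarrow> real^3 \<Rightarrow> real" where
  "prob e w = e \<bullet> w"

text \<open>Total error of measurement {e, u - e} (guess w1 on e, w2 on u - e), uniform prior.\<close>
definition total_error :: "real^3 \<Rightarrow> real^3 \<Rightarrow> real^3 \<Rightarrow> real" where
  "total_error w1 w2 e = (prob e w2 + prob (unit_eff - e) w1) / 2"

definition min_error_meas :: "nat \<Rightarrow> real^3 \<Rightarrow> real^3 \<Rightarrow> real^3 \<Rightarrow> bool" where
  "min_error_meas n w1 w2 e \<longleftrightarrow> e \<in> effect_set n \<and>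
     (\<forall>e' \<in> effect_set n. total_error w1 w2 e \<le> total_error w1 w2 e')"

definition information_symmetry :: "nat \<Rightarrow> bool" where
  "information_symmetry n \<longleftrightarrow>
     (\<forall>w1 \<in> pure_states n. \<forall>w2 \<in> pure_states n. w1 \<noteq> w2 \<longrightarrow>
        (\<exists>e. min_error_meas n w1 w2 e \<and> e extreme_point_of (effect_set n) \<and>
             prob e w2 = prob (unit_eff - e) w1))"

end

theory Submission imports Defs begin

lemma dot3: "(vector [a,b,c] :: real^3) \<bullet> vector [x,y,z] = a*x+b*y+c*z"
  by (simp add: inner_vec_def sum_3)

lemma cpos: assumes "n \<ge> 3" shows "cos (pi / real n) > 0"
proof -
  have "pi / real n \<le> pi / 3" using assms by (intro divide_left_mono) auto
  then have "pi / real n < pi/2" using pi_gt_zero by linarith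
  moreover have "pi / real n > 0" using assms by simp
  ultimately show ?thesis by (intro cos_gt_zero_pi) auto
qed

lemma rn_sq: assumes "n \<ge> 3" shows "(rn n)^2 = 1 / cos (pi / real n)" "rn n > 0"
  using cpos[OF assms] by (auto simp: rn_def)

lemma unit_dot: "unit_eff \<bullet> pure_state n i = 1"
  by (simp add: unit_eff_def pure_state_def dot3)

lemma ps0: "pure_state n 0 = vector [rn n, 0, 1]"
  by (simp add: pure_state_def)

lemma odd_aux:
  assumes n: "n \<ge> 5" and m: "m \<le> 2*n"
  shows "2 * cos (real m * pi / real n) \<noteq> 1 / cos (pi / real n) - 1"
proof
  assume eq: "2 * cos (real m * pi / real n) = 1 / cos (pi / real n) - 1"
  define h where "h = pi / (2 * real n)"
  define s where "s = sin h"
  have hpos: "h > 0" using n by (simp add: h_def)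
  have hle: "h \<le> pi / 10" using n unfolding h_def by (intro divide_left_mono) auto
  have "pi / 10 < 1/2" using pi_less_4 by simp
  have spos: "s > 0" unfolding s_def using hpos hle pi_gt3 by (intro sin_gt_zero) auto
  have sle: "s \<le> h" unfolding s_def using hpos by (simp add: sin_x_le_x)
  have shalf: "s < 1/2" using sle hle \<open>pi/10 < 1/2\<close> by simp
  have c: "cos (pi / real n) = 1 - 2 * s^2"
    unfolding s_def h_def using n by (simp add: cos_double_sin[symmetric] field_simps)
  have ssq: "s^2 < (1/2)^2" using power_strict_mono[of s "1/2" 2] spos shalf by simp
  have ssq': "s^2 < 1/4" using ssq by (simp add: power2_eq_square)
  have cpos': "0 < 1 - 2 * s^2" using ssq' by simp
  have rho: "cos (real m * pi / real n) = s^2 / (1 - 2 * s^2)"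
    using eq c cpos' by (simp add: field_simps)
  have rhopos: "s^2 / (1 - 2 * s^2) > 0" using spos cpos' by simp
  have rhos: "s^2 / (1 - 2 * s^2) < s"
  proof -
    have "s < 1 - 2 * s^2" using ssq' shalf by simp
    then have "s * s < s * (1 - 2 * s^2)" using spos by (intro mult_strict_left_mono) auto
    then have "s^2 < s * (1 - 2 * s^2)" by (simp add: power2_eq_square)
    then show ?thesis using cpos' by (simp add: field_simps)
  qed
  have "\<exists>m'. m' \<le> n \<and> cos (real m * pi / real n) = cos (real m' * pi / real n)"
  proof (cases "m \<le> n")
    case True then show ?thesis by blast
  next
    case False
    have np: "real n > 0" using n by simp
    have "real (2*n-m) = 2*real n - real m" using m by (simp add: of_nat_diff)
    then have "real m * pi / real n = 2*pi - real (2*n - m) * pi / real n"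
      using np by (simp add: field_simps)
    then have "cos (real m * pi / real n) = cos (real (2*n - m) * pi / real n)"
      by (simp add: cos_diff)
    then show ?thesis using False by (intro exI[of _ "2*n-m"]) auto
  qed
  then obtain m' where m': "m' \<le> n" and cm: "cos (real m * pi / real n) = cos (real m' * pi / real n)"
    by blast
  define x where "x = real m' * pi / real n"
  have x0: "0 \<le> x" unfolding x_def by simp
  have xpi: "x \<le> pi"
  proof -
    have "real m' * pi / real n \<le> real n * pi / real n"
      using m' by (intro divide_right_mono mult_right_mono) auto
    then show ?thesis using n by (simp add: x_def)
  qed
  have cx: "cos x = s^2 / (1 - 2 * s^2)" using rho cm x_def by simp
  have "x < pi/2"
  proof (rule ccontr)
    assume "\<not> x < pi/2"
    then have "cos x \<le> cos (pi/2)" using xpi by (intro cos_monotone_0_pi_le) auto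
    then show False using cx rhopos by simp
  qed
  moreover have "pi/2 - h < x"
  proof -
    have "cos x < cos (pi/2 - h)" using cx rhos by (simp add: s_def cos_sin_eq)
    then show ?thesis using x0 xpi hpos hle
      by (subst (asm) cos_mono_less_eq) (auto simp: h_def)
  qed
  ultimately have a: "pi/2 - pi/(2*real n) < real m' * pi / real n" "real m' * pi / real n < pi/2"
    by (auto simp: x_def h_def)
  have np: "real n > 0" using n by simp
  from a(1) have "real n - 1 < 2 * real m'" using np pi_gt_zero
  proof -
    have "pi/2 - pi/(2*real n) = pi * ((real n - 1) / (2 * real n))" using np by (simp add: field_simps)
    moreover have "real m' * pi / real n = pi * (2 * real m' / (2 * real n))" using np by (simp add: field_simps)
    ultimately have "(real n - 1) / (2 * real n) < 2 * real m' / (2 * real n)" using a pi_gt_zero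
      by (metis mult_less_cancel_left_pos)
    then show ?thesis using np by (subst (asm) divide_less_cancel) auto
  qed
  moreover from a(2) have "2 * real m' < real n"
  proof -
    have "pi/2 = pi * (real n / (2 * real n))" using np by (simp add: field_simps)
    moreover have "real m' * pi / real n = pi * (2 * real m' / (2 * real n))" using np by (simp add: field_simps)
    ultimately have "2 * real m' / (2 * real n) < real n / (2 * real n)" using a pi_gt_zero
      by (metis mult_less_cancel_left_pos)
    then show ?thesis using np by (subst (asm) divide_less_cancel) auto
  qed
  ultimately have "real n < real (2*m'+1)" "real (2*m') < real n" by auto
  then have "n < 2*m'+1" "2*m' < n" by (simp_all only: of_nat_less_iff)
  then show False by simp
qed

lemma trig_id: "cos (p::real) * (1 + cos (2*t)) + sin p * sin (2*(t::real)) = 2 * cos t * cos (p - t)"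
proof -
  have a: "cos(2*t) = 2 * cos t ^ 2 - 1" by (rule cos_double_cos)
  have b: "sin(2*t) = 2 * sin t * cos t" by (rule sin_double)
  show ?thesis unfolding a b cos_diff by (simp add: algebra_simps power2_eq_square)
qed

lemma even_core:
  assumes n: "n \<ge> 6" "even n" and b: "(b = 1 \<and> n mod 4 = 2) \<or> (b = 2 \<and> n mod 4 = 0)"
  shows "ext_eff n i \<bullet> (pure_state n 0 + pure_state n b) \<noteq> 1"
proof
  assume H: "ext_eff n i \<bullet> (pure_state n 0 + pure_state n b) = 1"
  define r where "r = rn n"
  define t where "t = pi * real b / real n"
  define p where "p = (2 * real i - 1) * pi / real n"
  have rpos: "r > 0" using rn_sq[of n] n by (simp add: r_def)
  have ext: "ext_eff n i = (1/2) *\<^sub>R vector [r * cos p, r * sin p, 1]"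
    using n by (simp add: ext_eff_def r_def p_def)
  have "2 * pi * real b / real n = 2 * t" by (simp add: t_def)
  then have ps: "pure_state n b = vector [r * cos (2*t), r * sin (2*t), 1]"
    by (simp add: pure_state_def r_def)
  have "(1/2) * ((r * cos p) * r + (r * sin p) * 0 + 1 * 1) + (1/2) * ((r * cos p) * (r * cos (2*t)) + (r * sin p) * (r * sin (2*t)) + 1 * 1) = 1"
    using H unfolding ext ps ps0 r_def[symmetric] by (simp only: inner_add_right inner_scaleR_left dot3)
  then have "r^2 * (cos p * (1 + cos (2*t)) + sin p * sin (2*t)) = 0"
    by (simp add: algebra_simps power2_eq_square)
  then have "cos p * (1 + cos (2*t)) + sin p * sin (2*t) = 0" using rpos by simp
  then have Z: "cos t * cos (p - t) = 0" by (simp add: trig_id)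
  have bb: "b = 1 \<or> b = 2" using b by auto
  have "t \<le> pi / 3"
  proof -
    have "t \<le> pi * 2 / real n" unfolding t_def using bb by (intro divide_right_mono) auto
    also have "\<dots> \<le> pi * 2 / 6" using n by (intro divide_left_mono) auto
    finally show ?thesis by simp
  qed
  moreover have "t > 0" using bb n by (auto simp: t_def)
  ultimately have "cos t > 0" using pi_gt_zero by (intro cos_gt_zero_pi) auto
  with Z have cz: "cos (p - t) = 0" by simp
  define k where "k = 2 * int i - 1 - int b"
  have "p - t = ((2*real i - 1) * pi - pi * real b)/real n" by (simp add: p_def t_def diff_divide_distrib)
  moreover have "of_int k * pi = (2*real i - 1) * pi - pi * real b" by (simp add: k_def algebra_simps)
  ultimately have "p - t = of_int k * pi / real n" by simp
  with cz obtain j where j: "odd j" "of_int k * pi / real n = of_int j * (pi/2)"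
    using cos_zero_iff_int by metis
  have np: "real n > 0" using n by simp
  have "real_of_int (2 * k) = real_of_int (j * int n)"
  proof -
    from j(2) have "of_int k * pi = of_int j * (pi/2) * real n" using np by (simp add: field_simps)
    then have "pi * (2 * of_int k) = pi * (of_int j * real n)" by (simp add: algebra_simps)
    then show ?thesis by simp
  qed
  then have E: "2 * k = j * int n" by (simp only: of_int_eq_iff)
  from b show False
  proof
    assume b1: "b = 1 \<and> n mod 4 = 2"
    then have "n = 4 * (n div 4) + 2" by presburger
    then have "int n = 4 * int (n div 4) + 2" by (metis of_nat_add of_nat_mult of_nat_numeral)
    with E b1 have "j = 2 * (int i - 1 - j * int (n div 4))" by (simp add: k_def algebra_simps)
    then have "even j" by (rule ssubst) simp
    then show False using j(1) by simp
  next
    assume b2: "b = 2 \<and> n mod 4 = 0"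
    then have "n = 4 * (n div 4)" by presburger
    then have "int n = 4 * int (n div 4)" by (metis of_nat_mult of_nat_numeral)
    with E b2 have "2 * int i - 3 = 2 * (j * int (n div 4))" by (simp add: k_def algebra_simps)
    then show False by presburger
  qed
qed

lemma odd_core:
  assumes n: "n \<ge> 5" "odd n" and i: "i < n"
  shows "ext_eff n i \<bullet> (pure_state n 0 + pure_state n 1) \<noteq> 1"
proof
  assume H: "ext_eff n i \<bullet> (pure_state n 0 + pure_state n 1) = 1"
  define r where "r = rn n"
  define t where "t = pi / real n"
  define p where "p = 2 * pi * real i / real n"
  have rpos: "r > 0" and r2: "r^2 = 1 / cos t" using rn_sq[of n] n by (auto simp: r_def t_def)
  have ct: "cos t > 0" using cpos[of n] n by (simp add: t_def)
  have ext: "ext_eff n i = (1 / (1 + r^2)) *\<^sub>R vector [r * cos p, r * sin p, 1]"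
    using n by (simp add: ext_eff_def r_def p_def)
  have "2 * pi * real 1 / real n = 2 * t" by (simp add: t_def)
  then have ps: "pure_state n 1 = vector [r * cos (2*t), r * sin (2*t), 1]"
    by (simp add: pure_state_def r_def)
  have "(1 / (1 + r^2)) * ((r * cos p) * r + (r * sin p) * 0 + 1 * 1) + (1 / (1 + r^2)) * ((r * cos p) * (r * cos (2*t)) + (r * sin p) * (r * sin (2*t)) + 1 * 1) = 1"
    using H unfolding ext ps ps0 r_def[symmetric] by (simp only: inner_add_right inner_scaleR_left dot3)
  then have m1: "(1 / (1 + r^2)) * (((r * cos p) * r + (r * sin p) * 0 + 1 * 1) + ((r * cos p) * (r * cos (2*t)) + (r * sin p) * (r * sin (2*t)) + 1 * 1)) = 1"
    by (simp only: distrib_left)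
  have pos: "1 + r^2 > 0" by (simp add: add_pos_nonneg)
  define AB where "AB = ((r * cos p) * r + (r * sin p) * 0 + 1 * 1) + ((r * cos p) * (r * cos (2*t)) + (r * sin p) * (r * sin (2*t)) + 1 * 1)"
  have "AB = (1 + r^2) * ((1 / (1 + r^2)) * AB)" using pos by simp
  also have "\<dots> = 1 + r^2" using m1 by (simp add: AB_def)
  finally have "AB = 1 + r^2" .
  then have "r^2 * (cos p * (1 + cos (2*t)) + sin p * sin (2*t)) + 2 = 1 + r^2"
    by (simp add: AB_def algebra_simps power2_eq_square)
  then have "r^2 * (2 * cos t * cos (p - t)) + 1 = r^2" by (simp add: trig_id)
  then have "(1 / cos t) * (2 * cos t * cos (p - t)) + 1 = 1 / cos t" by (simp add: r2)
  then have EQ: "2 * cos (p - t) = 1 / cos t - 1" using ct by (simp add: field_simps)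
  have "\<exists>m. m \<le> 2 * n \<and> cos (p - t) = cos (real m * pi / real n)"
  proof (cases "i = 0")
    case True
    then have "p - t = - (real 1 * pi / real n)" by (simp add: p_def t_def)
    then show ?thesis using n by (intro exI[of _ 1]) simp
  next
    case False
    have "p - t = (2*pi*real i - pi)/real n" by (simp add: p_def t_def diff_divide_distrib)
    moreover have "real (2*i - 1) = 2 * real i - 1" using False by (simp add: of_nat_diff)
    ultimately have "p - t = real (2*i - 1) * pi / real n" by (simp add: algebra_simps)
    moreover have "2*i - 1 \<le> 2*n" using i by simp
    ultimately show ?thesis by (intro exI[of _ "2*i - 1"] conjI) simp_all
  qed
  then obtain m where m: "m \<le> 2*n" and cm: "cos (p - t) = cos (real m * pi / real n)" by (elim exE conjE)
  have NE: "2 * cos (real m * pi / real n) \<noteq> 1 / cos (pi / real n) - 1"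
    using n(1) m by (rule odd_aux)
  from EQ cm have "2 * cos (real m * pi / real n) = 1 / cos (pi / real n) - 1" by (simp only: t_def)
  with NE show False by (rule notE)
qed

lemma gen_ok:
  assumes n: "n \<ge> 3" "(odd n \<and> n \<ge> 5) \<or> (even n \<and> n \<ge> 6)"
    and b: "b = (if odd n then 1 else if n mod 4 = 2 then 1 else 2)"
    and i: "i < n"
  shows "ext_eff n i \<bullet> (pure_state n 0 + pure_state n b) \<noteq> 1"
proof (cases "odd n")
  case True
  then show ?thesis using n b i odd_core[of n i] by auto
next
  case False
  then have "(b = 1 \<and> n mod 4 = 2) \<or> (b = 2 \<and> n mod 4 = 0)" using b by presburger
  then show ?thesis using n False even_core[of n b i] by auto
qed

theorem theorem1:
  fixes n :: nat
  assumes "n \<ge> 3"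
    and "(odd n \<and> n \<ge> 5) \<or> (even n \<and> n \<ge> 6)"
  shows "\<not> information_symmetry n"
proof
  assume IS: "information_symmetry n"
  define b :: nat where "b = (if odd n then 1 else if n mod 4 = 2 then 1 else 2)"
  define w1 where "w1 = pure_state n 0"
  define w2 where "w2 = pure_state n b"
  have n5: "n \<ge> 5" using assms by auto
  have b12: "b = 1 \<or> b = 2" by (simp add: b_def)
  have bn: "b < n" using b12 n5 by auto
  have w1P: "w1 \<in> pure_states n" using n5 by (auto simp: w1_def pure_states_def)
  have w2P: "w2 \<in> pure_states n" using bn by (auto simp: w2_def pure_states_def)
  have "w1 \<noteq> w2"
  proof
    assume "w1 = w2"
    then have "w1 $ 2 = w2 $ 2" by simp
    then have "rn n * sin (2 * pi * real b / real n) = 0" by (simp add: w1_def w2_def pure_state_def)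
    moreover have "rn n > 0" using rn_sq[of n] assms by simp
    moreover have "sin (2 * pi * real b / real n) > 0"
    proof (rule sin_gt_zero)
      show "0 < 2 * pi * real b / real n" using b12 n5 by auto
      have "2 * pi * real b / real n \<le> 2 * pi * 2 / real n" using b12 by (intro divide_right_mono) auto
      also have "\<dots> \<le> 2 * pi * 2 / 5" using n5 by (intro divide_left_mono) auto
      also have "\<dots> < pi" using pi_gt_zero by simp
      finally show "2 * pi * real b / real n < pi" .
    qed
    ultimately show False by simp
  qed
  with IS w1P w2P obtain e where me: "min_error_meas n w1 w2 e" and ex: "e extreme_point_of (effect_set n)"
    and pe: "prob e w2 = prob (unit_eff - e) w1"
    unfolding information_symmetry_def by blast
  have eG: "e \<in> {0, unit_eff} \<union> {ext_eff n i | i. i < n} \<union> {unit_eff - ext_eff n i | i. i < n}"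
    using ex unfolding effect_set_def by (rule extreme_point_of_convex_hull)
  have u1: "unit_eff \<bullet> w1 = 1" "unit_eff \<bullet> w2 = 1" by (simp_all add: w1_def w2_def unit_dot)
  have "(unit_eff - e) \<bullet> w1 = 1 - e \<bullet> w1" by (simp only: inner_diff_left u1)
  with pe have E1: "e \<bullet> (w1 + w2) = 1"
    by (simp add: prob_def inner_add_right)
  have ok: "\<And>i. i < n \<Longrightarrow> ext_eff n i \<bullet> (w1 + w2) \<noteq> 1"
    unfolding w1_def w2_def using gen_ok[OF assms b_def] by blast
  from eG show False
  proof (elim UnE insertE)
    assume "e = 0" then show False using E1 by simp
  next
    assume "e = unit_eff" then show False using E1 u1 by (simp add: inner_add_right)
  next
    assume "e \<in> {}" then show False by simp
  next
    assume "e \<in> {ext_eff n i | i. i < n}"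
    then obtain i where "i < n" "e = ext_eff n i" by blast
    then show False using E1 ok by blast
  next
    assume "e \<in> {unit_eff - ext_eff n i | i. i < n}"
    then obtain i where i: "i < n" "e = unit_eff - ext_eff n i" by blast
    then have "ext_eff n i \<bullet> (w1 + w2) = 1" using E1 u1 by (simp add: inner_diff_left inner_add_right)
    then show False using ok i by blast
  qed
qed

end
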